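(* Let $\tau\colon\tilde{\mathcal{E}}\to\mathcal{E}$ be a finite-dimensional irreducible Abelian covering and let $\omega$ be a nontrivial conservation law of $\mathcal{E}$. Then the pull-back $\tau^*\omega$ is a trivial conservation law of $\tilde{\mathcal{E}}$ if and only if $[\omega]\in\mathcal{L}_\tau$.
   Context: Setting: $\mathcal{E}$ is a differentially connected infinitely prolonged equation with two independent variables $x,y$ and total derivatives $D_x,D_y$. A conservation law is a horizontal 1-form $\omega=X\,dx+Y\,dy$ with $D_xY-D_yX=0$; it is trivial if $\omega=d_hP=D_xP\,dx+D_yP\,dy$ for some function $P$; $\mathrm{CL}(\mathcal{E})$ is the space of conservation laws modulo trivial ones. For a covering $\tau\colon\tilde{\mathcal{E}}\to\mathcal{E}$ with total derivatives $\tilde D_x,\tilde D_y$, conservation laws of $\tilde{\mathcal{E}}$ and their triviality are defined the same way using $\tilde D_x,\tilde D_y$ and functions on $\tilde{\mathcal{E}}$. A covering of rank $r$ is Abelian if fiber coordinates $w^1,\dots,w^r$ can be chosen with $\tilde D_x=D_x+\sum_\alpha X^\alpha\partial/\partial w^\alpha$, $\tilde D_y=D_y+\sum_\alpha Y^\alpha\partial/\partial w^\alpha$, $X^\alpha,Y^\alpha\in\mathcal{F}(\mathcal{E})$; it is irreducible if $\tilde D_xh=\tilde D_yh=0$ has only constant solutions. $\mathcal{L}_\tau\subset\mathrm{CL}(\mathcal{E})$ is the subspace spanned by the classes $[X^\alpha dx+Y^\alpha dy]$, $\alpha=1,\dots,r$ (it depends only on the equivalence class of $\tau$). *)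

theory Defs
  imports "HOL-Analysis.Analysis"
begin

text \<open>Abstract model of a differentially connected infinitely prolonged equation
  with two independent variables: its points form a type 'p, its smooth functions
  form the set F, and the total derivatives are Dx, Dy acting on F.\<close>

definition diff_conn_eq ::
  "('p \<Rightarrow> real) set \<Rightarrow> (('p \<Rightarrow> real) \<Rightarrow> ('p \<Rightarrow> real)) \<Rightarrow> (('p \<Rightarrow> real) \<Rightarrow> ('p \<Rightarrow> real)) \<Rightarrow> bool" where
  "diff_conn_eq F Dx Dy \<longleftrightarrow>
     (\<forall>c. (\<lambda>_. c) \<in> F) \<and>
     (\<forall>f\<in>F. \<forall>g\<in>F. (\<lambda>p. f p + g p) \<in> F \<and> (\<lambda>p. f p * g p) \<in> F) \<and>
     (\<forall>D\<in>{Dx, Dy}.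
        (\<forall>f\<in>F. D f \<in> F) \<and>
        (\<forall>f\<in>F. \<forall>g\<in>F. D (\<lambda>p. f p + g p) = (\<lambda>p. D f p + D g p)) \<and>
        (\<forall>f\<in>F. \<forall>c. D (\<lambda>p. c * f p) = (\<lambda>p. c * D f p)) \<and>
        (\<forall>f\<in>F. \<forall>g\<in>F. D (\<lambda>p. f p * g p) = (\<lambda>p. D f p * g p + f p * D g p))) \<and>
     (\<forall>f\<in>F. Dx (Dy f) = Dy (Dx f)) \<and>
     (\<forall>f\<in>F. Dx f = (\<lambda>_. 0) \<and> Dy f = (\<lambda>_. 0) \<longrightarrow> (\<exists>c. f = (\<lambda>_. c)))"

text \<open>Conservation laws (X dx + Y dy with D_x Y - D_y X = 0) and trivial ones,
  for an arbitrary space of functions with total derivatives.\<close>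

definition conservation_law ::
  "('q \<Rightarrow> real) set \<Rightarrow> (('q \<Rightarrow> real) \<Rightarrow> ('q \<Rightarrow> real)) \<Rightarrow> (('q \<Rightarrow> real) \<Rightarrow> ('q \<Rightarrow> real))
   \<Rightarrow> ('q \<Rightarrow> real) \<Rightarrow> ('q \<Rightarrow> real) \<Rightarrow> bool" where
  "conservation_law F Dx Dy X Y \<longleftrightarrow> X \<in> F \<and> Y \<in> F \<and> (\<lambda>q. Dx Y q - Dy X q) = (\<lambda>_. 0)"

definition trivial_cl ::
  "('q \<Rightarrow> real) set \<Rightarrow> (('q \<Rightarrow> real) \<Rightarrow> ('q \<Rightarrow> real)) \<Rightarrow> (('q \<Rightarrow> real) \<Rightarrow> ('q \<Rightarrow> real))
   \<Rightarrow> ('q \<Rightarrow> real) \<Rightarrow> ('q \<Rightarrow> real) \<Rightarrow> bool" where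
  "trivial_cl F Dx Dy X Y \<longleftrightarrow> (\<exists>P\<in>F. X = Dx P \<and> Y = Dy P)"

text \<open>Abelian covering of rank CARD('r): points of the covering are pairs (p, w),
  w = (w^1,...,w^r) the fibre coordinates.  Partial derivative in w^a:\<close>

definition dw :: "'r::finite \<Rightarrow> ('p \<times> (real^'r) \<Rightarrow> real) \<Rightarrow> 'p \<times> (real^'r) \<Rightarrow> real" where
  "dw a P = (\<lambda>(p, w). deriv (\<lambda>t. P (p, w + t *\<^sub>R axis a 1)) 0)"

coinductive cov_smooth ::
  "('p \<Rightarrow> real) set \<Rightarrow> (('p \<Rightarrow> real) \<Rightarrow> ('p \<Rightarrow> real)) \<Rightarrow> (('p \<Rightarrow> real) \<Rightarrow> ('p \<Rightarrow> real))
   \<Rightarrow> ('p \<times> (real^'r::finite) \<Rightarrow> real) \<Rightarrow> bool"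
  for F Dx Dy where
  "\<lbrakk> \<forall>w. (\<lambda>p. P (p, w)) \<in> F;
     \<forall>p w. (\<lambda>v. P (p, v)) differentiable (at w);
     \<forall>a p w. \<forall>D\<in>{Dx, Dy}.
        ((\<lambda>t. D (\<lambda>q. P (q, w + t *\<^sub>R axis a 1)) p) has_real_derivative
           D (\<lambda>q. dw a P (q, w)) p) (at 0);
     \<forall>a. cov_smooth F Dx Dy (dw a P) \<rbrakk>
   \<Longrightarrow> cov_smooth F Dx Dy P"

definition cov_funs ::
  "('p \<Rightarrow> real) set \<Rightarrow> (('p \<Rightarrow> real) \<Rightarrow> ('p \<Rightarrow> real)) \<Rightarrow> (('p \<Rightarrow> real) \<Rightarrow> ('p \<Rightarrow> real))
   \<Rightarrow> ('p \<times> (real^'r::finite) \<Rightarrow> real) set" where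
  "cov_funs F Dx Dy = {P. cov_smooth F Dx Dy P}"

definition tD :: "(('p \<Rightarrow> real) \<Rightarrow> ('p \<Rightarrow> real)) \<Rightarrow> ('r::finite \<Rightarrow> 'p \<Rightarrow> real)
   \<Rightarrow> ('p \<times> (real^'r) \<Rightarrow> real) \<Rightarrow> ('p \<times> (real^'r) \<Rightarrow> real)" where
  "tD D Xs P = (\<lambda>(p, w). D (\<lambda>q. P (q, w)) p + (\<Sum>a\<in>UNIV. Xs a p * dw a P (p, w)))"

text \<open>Abelian covering data: X^a, Y^a are functions on E and the covering
  total derivatives commute (equivalently D_x Y^a = D_y X^a).\<close>

definition abelian_covering ::
  "('p \<Rightarrow> real) set \<Rightarrow> (('p \<Rightarrow> real) \<Rightarrow> ('p \<Rightarrow> real)) \<Rightarrow> (('p \<Rightarrow> real) \<Rightarrow> ('p \<Rightarrow> real))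
   \<Rightarrow> ('r::finite \<Rightarrow> 'p \<Rightarrow> real) \<Rightarrow> ('r \<Rightarrow> 'p \<Rightarrow> real) \<Rightarrow> bool" where
  "abelian_covering F Dx Dy Xs Ys \<longleftrightarrow> (\<forall>a. conservation_law F Dx Dy (Xs a) (Ys a))"

definition irreducible_cov ::
  "('p \<Rightarrow> real) set \<Rightarrow> (('p \<Rightarrow> real) \<Rightarrow> ('p \<Rightarrow> real)) \<Rightarrow> (('p \<Rightarrow> real) \<Rightarrow> ('p \<Rightarrow> real))
   \<Rightarrow> ('r::finite \<Rightarrow> 'p \<Rightarrow> real) \<Rightarrow> ('r \<Rightarrow> 'p \<Rightarrow> real) \<Rightarrow> bool" where
  "irreducible_cov F Dx Dy Xs Ys \<longleftrightarrow>
     (\<forall>h \<in> cov_funs F Dx Dy. tD Dx Xs h = (\<lambda>_. 0) \<and> tD Dy Ys h = (\<lambda>_. 0)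
        \<longrightarrow> (\<exists>c. h = (\<lambda>_. c)))"

text \<open>[X dx + Y dy] lies in L_tau, the span of the classes [X^a dx + Y^a dy] in CL(E).\<close>

definition in_L_tau ::
  "('p \<Rightarrow> real) set \<Rightarrow> (('p \<Rightarrow> real) \<Rightarrow> ('p \<Rightarrow> real)) \<Rightarrow> (('p \<Rightarrow> real) \<Rightarrow> ('p \<Rightarrow> real))
   \<Rightarrow> ('r::finite \<Rightarrow> 'p \<Rightarrow> real) \<Rightarrow> ('r \<Rightarrow> 'p \<Rightarrow> real) \<Rightarrow> ('p \<Rightarrow> real) \<Rightarrow> ('p \<Rightarrow> real) \<Rightarrow> bool" where
  "in_L_tau F Dx Dy Xs Ys X Y \<longleftrightarrow>
     (\<exists>c :: 'r \<Rightarrow> real. trivial_cl F Dx Dy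
        (\<lambda>p. X p - (\<Sum>a\<in>UNIV. c a * Xs a p)) (\<lambda>p. Y p - (\<Sum>a\<in>UNIV. c a * Ys a p)))"

definition pullback :: "('p \<Rightarrow> real) \<Rightarrow> ('p \<times> (real^'r) \<Rightarrow> real)" where
  "pullback f = (\<lambda>(p, w). f p)"

end

theory Submission
  imports Defs
begin

lemma dshift:
  fixes g g' :: "'v::real_normed_vector \<Rightarrow> real"
  assumes "\<And>v. ((\<lambda>t. g (v + t *\<^sub>R A)) has_real_derivative g' v) (at 0)"
  shows "((\<lambda>t. g (w + t *\<^sub>R A)) has_real_derivative g' (w + t0 *\<^sub>R A)) (at t0)"
proof -
  have "((\<lambda>t. g ((w + t0 *\<^sub>R A) + t *\<^sub>R A)) has_real_derivative g' (w + t0 *\<^sub>R A)) (at 0)"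
    by (rule assms)
  moreover have "(\<lambda>t. g ((w + t0 *\<^sub>R A) + t *\<^sub>R A)) = (\<lambda>t. (\<lambda>t. g (w + t *\<^sub>R A)) (t + t0))"
    by (simp add: algebra_simps)
  ultimately show ?thesis using DERIV_shift[of "\<lambda>t. g (w + t *\<^sub>R A)" _ 0 t0] by simp
qed

lemma mvt_two:
  fixes f fa fab :: "'v::real_normed_vector \<Rightarrow> real"
  assumes da: "\<And>v. ((\<lambda>t. f (v + t *\<^sub>R A)) has_real_derivative fa v) (at 0)"
  and dab: "\<And>v. ((\<lambda>t. fa (v + t *\<^sub>R B)) has_real_derivative fab v) (at 0)"
  and s: "s > 0" and t: "t > 0"
  shows "\<exists>\<sigma> \<tau>. 0 < \<sigma> \<and> \<sigma> < s \<and> 0 < \<tau> \<and> \<tau> < t \<and>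
     f (v + s *\<^sub>R A + t *\<^sub>R B) - f (v + s *\<^sub>R A) - f (v + t *\<^sub>R B) + f v
       = s * t * fab (v + \<sigma> *\<^sub>R A + \<tau> *\<^sub>R B)"
proof -
  define g where "g \<sigma> = f ((v + t *\<^sub>R B) + \<sigma> *\<^sub>R A) - f (v + \<sigma> *\<^sub>R A)" for \<sigma>
  have "DERIV g x :> fa ((v + t *\<^sub>R B) + x *\<^sub>R A) - fa (v + x *\<^sub>R A)" for x
    unfolding g_def by (intro DERIV_diff dshift[OF da])
  from MVT2[OF s this] obtain \<sigma> where sg: "0 < \<sigma>" "\<sigma> < s"
    and e1: "g s - g 0 = (s - 0) * (fa ((v + t *\<^sub>R B) + \<sigma> *\<^sub>R A) - fa (v + \<sigma> *\<^sub>R A))" by blast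
  have "DERIV (\<lambda>\<tau>. fa ((v + \<sigma> *\<^sub>R A) + \<tau> *\<^sub>R B)) x :> fab ((v + \<sigma> *\<^sub>R A) + x *\<^sub>R B)" for x
    by (rule dshift[OF dab])
  from MVT2[OF t this] obtain \<tau> where tg: "0 < \<tau>" "\<tau> < t"
    and e2: "fa ((v + \<sigma> *\<^sub>R A) + t *\<^sub>R B) - fa ((v + \<sigma> *\<^sub>R A) + 0 *\<^sub>R B)
        = (t - 0) * fab ((v + \<sigma> *\<^sub>R A) + \<tau> *\<^sub>R B)" by blast
  have "f (v + s *\<^sub>R A + t *\<^sub>R B) - f (v + s *\<^sub>R A) - f (v + t *\<^sub>R B) + f v = g s - g 0"
    unfolding g_def by (simp add: algebra_simps)
  also have "\<dots> = s * (fa ((v + \<sigma> *\<^sub>R A) + t *\<^sub>R B) - fa ((v + \<sigma> *\<^sub>R A) + 0 *\<^sub>R B))"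
    using e1 by (simp add: algebra_simps)
  also have "\<dots> = s * t * fab (v + \<sigma> *\<^sub>R A + \<tau> *\<^sub>R B)" using e2 by simp
  finally show ?thesis using sg tg by blast
qed

lemma clairaut:
  fixes f fa fb fab fba :: "'v::real_normed_vector \<Rightarrow> real"
  assumes da: "\<And>v. ((\<lambda>t. f (v + t *\<^sub>R A)) has_real_derivative fa v) (at 0)"
  and db: "\<And>v. ((\<lambda>t. f (v + t *\<^sub>R B)) has_real_derivative fb v) (at 0)"
  and dab: "\<And>v. ((\<lambda>t. fa (v + t *\<^sub>R B)) has_real_derivative fab v) (at 0)"
  and dba: "\<And>v. ((\<lambda>t. fb (v + t *\<^sub>R A)) has_real_derivative fba v) (at 0)"
  and cab: "isCont fab v" and cba: "isCont fba v"
  shows "fab v = fba v"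
proof (rule ccontr)
  assume ne: "fab v \<noteq> fba v"
  define e where "e = \<bar>fab v - fba v\<bar> / 2"
  have e: "e > 0" using ne by (simp add: e_def)
  obtain d1 where d1: "d1 > 0" "\<And>x. dist x v < d1 \<Longrightarrow> dist (fab x) (fab v) < e"
    using cab e unfolding continuous_at_eps_delta by blast
  obtain d2 where d2: "d2 > 0" "\<And>x. dist x v < d2 \<Longrightarrow> dist (fba x) (fba v) < e"
    using cba e unfolding continuous_at_eps_delta by blast
  define s where "s = min d1 d2 / (2 * (norm A + norm B + 1))"
  have pos: "2 * (norm A + norm B + 1) > 0" by (smt (verit) norm_ge_zero)
  have s: "s > 0" using d1 d2 pos unfolding s_def by (intro divide_pos_pos) auto
  have close: "dist (v + a *\<^sub>R A + b *\<^sub>R B) v < min d1 d2" if "0 < a" "a < s" "0 < b" "b < s" for a b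
  proof -
    have "dist (v + a *\<^sub>R A + b *\<^sub>R B) v = norm (a *\<^sub>R A + b *\<^sub>R B)"
      by (simp add: dist_norm)
    also have "\<dots> \<le> a * norm A + b * norm B"
      using that by (metis abs_of_pos norm_scaleR norm_triangle_ineq)
    also have "\<dots> \<le> s * norm A + s * norm B"
      using that by (intro add_mono mult_right_mono) auto
    also have "\<dots> < s * (2 * (norm A + norm B + 1))"
    proof -
      have "0 \<le> s * norm A" "0 \<le> s * norm B" using s by simp_all
      moreover have "s * (2 * (norm A + norm B + 1)) = 2 * (s * norm A) + 2 * (s * norm B) + 2 * s"
        by (simp add: algebra_simps)
      ultimately show ?thesis using s by linarith
    qed
    also have "\<dots> = min d1 d2" unfolding s_def using pos by simp
    finally show ?thesis .
  qed
  obtain \<sigma> \<tau> where st: "0 < \<sigma>" "\<sigma> < s" "0 < \<tau>" "\<tau> < s" and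
    E1: "f (v + s *\<^sub>R A + s *\<^sub>R B) - f (v + s *\<^sub>R A) - f (v + s *\<^sub>R B) + f v
       = s * s * fab (v + \<sigma> *\<^sub>R A + \<tau> *\<^sub>R B)"
    using mvt_two[OF da dab s s] by blast
  obtain \<tau>' \<sigma>' where st': "0 < \<tau>'" "\<tau>' < s" "0 < \<sigma>'" "\<sigma>' < s" and
    E2: "f (v + s *\<^sub>R B + s *\<^sub>R A) - f (v + s *\<^sub>R B) - f (v + s *\<^sub>R A) + f v
       = s * s * fba (v + \<tau>' *\<^sub>R B + \<sigma>' *\<^sub>R A)"
    using mvt_two[OF db dba s s] by blast
  have "v + s *\<^sub>R B + s *\<^sub>R A = v + s *\<^sub>R A + s *\<^sub>R B" by (simp add: algebra_simps)
  with E1 E2 s have eq: "fab (v + \<sigma> *\<^sub>R A + \<tau> *\<^sub>R B) = fba (v + \<sigma>' *\<^sub>R A + \<tau>' *\<^sub>R B)"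
    by (simp add: algebra_simps)
  have "dist (fab (v + \<sigma> *\<^sub>R A + \<tau> *\<^sub>R B)) (fab v) < e"
    using d1 close[OF st] by auto
  moreover have "dist (fba (v + \<sigma>' *\<^sub>R A + \<tau>' *\<^sub>R B)) (fba v) < e"
    using d2 close[of \<sigma>' \<tau>'] st' by auto
  ultimately have "\<bar>fab v - fba v\<bar> < 2 * e" using eq by (simp add: dist_real_def)
  then show False by (simp add: e_def)
qed



lemma sum_axis_lin:
  "(\<Sum>b\<in>UNIV. c b * (w + t *\<^sub>R axis a 1) $ b) = (\<Sum>b\<in>UNIV. c b * w $ b) + t * c (a::'r::finite)"
proof -
  have eq: "(\<lambda>b. c b * (w + t *\<^sub>R axis a 1) $ b) = (\<lambda>b. c b * w $ b + (if b = a then t * c a else 0))"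
    by (auto simp: axis_def algebra_simps)
  show ?thesis by (simp only: eq sum.distrib) simp
qed

lemma D_props:
  assumes dc: "diff_conn_eq F Dx Dy" and D: "D \<in> {Dx, Dy}"
  shows "\<And>k. D (\<lambda>_. k) = (\<lambda>_. 0)"
    and "\<And>f k. f \<in> F \<Longrightarrow> D (\<lambda>p. f p + k) = D f"
proof -
  have one: "(\<lambda>_. 1::real) \<in> F" using dc[unfolded diff_conn_eq_def, THEN conjunct1] by blast
  note DD = bspec[OF dc[unfolded diff_conn_eq_def, THEN conjunct2, THEN conjunct2, THEN conjunct1] D]
  have la: "\<forall>f\<in>F. \<forall>g\<in>F. D (\<lambda>p. f p + g p) = (\<lambda>p. D f p + D g p)"
    using DD[THEN conjunct2, THEN conjunct1] .
  have lc: "\<forall>f\<in>F. \<forall>c. D (\<lambda>p. c * f p) = (\<lambda>p. c * D f p)"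
    using DD[THEN conjunct2, THEN conjunct2, THEN conjunct1] .
  have lb: "\<forall>f\<in>F. \<forall>g\<in>F. D (\<lambda>p. f p * g p) = (\<lambda>p. D f p * g p + f p * D g p)"
    using DD[THEN conjunct2, THEN conjunct2, THEN conjunct2] .
  have e1: "D (\<lambda>_. 1) = (\<lambda>p. D (\<lambda>_. 1) p + D (\<lambda>_. 1) p)"
    using lb[rule_format, OF one one] by simp
  have z: "D (\<lambda>_. 1) = (\<lambda>_. 0)"
  proof
    fix p have "D (\<lambda>_. 1) p = D (\<lambda>_. 1) p + D (\<lambda>_. 1) p" using fun_cong[OF e1, of p] by simp
    then show "D (\<lambda>_. 1) p = 0" by linarith
  qed
  show c: "D (\<lambda>_. k) = (\<lambda>_. 0)" for k
    using lc[rule_format, OF one, of k] z by simp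
  show "D (\<lambda>p. f p + k) = D f" if "f \<in> F" for f k
  proof -
    have kF: "(\<lambda>_. k) \<in> F" using dc[unfolded diff_conn_eq_def, THEN conjunct1] by blast
    have "D (\<lambda>p. f p + k) = (\<lambda>p. D f p + D (\<lambda>_. k) p)" using la[rule_format, OF that kF] by simp
    then show ?thesis using c by simp
  qed
qed

lemma cs_unfold:
  assumes "cov_smooth F Dx Dy P"
  shows "(\<forall>w. (\<lambda>p. P (p, w)) \<in> F) \<and>
     (\<forall>p w. (\<lambda>v. P (p, v)) differentiable (at w)) \<and>
     (\<forall>a p w. \<forall>D\<in>{Dx, Dy}.
        ((\<lambda>t. D (\<lambda>q. P (q, w + t *\<^sub>R axis a 1)) p) has_real_derivative
           D (\<lambda>q. dw a P (q, w)) p) (at 0)) \<and>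
     (\<forall>a. cov_smooth F Dx Dy (dw a P))"
  using assms by (rule cov_smooth.cases) simp

lemma cs_parts:
  assumes "cov_smooth F Dx Dy P"
  shows "(\<lambda>p. P (p, w)) \<in> F"
    and "(\<lambda>v. P (p, v)) differentiable (at w)"
    and "D \<in> {Dx, Dy} \<Longrightarrow> ((\<lambda>t. D (\<lambda>q. P (q, w + t *\<^sub>R axis a 1)) p) has_real_derivative
           D (\<lambda>q. dw a P (q, w)) p) (at 0)"
    and "cov_smooth F Dx Dy (dw a P)"
proof -
  note u = cs_unfold[OF assms]
  show "(\<lambda>p. P (p, w)) \<in> F" using u[THEN conjunct1] by blast
  show "(\<lambda>v. P (p, v)) differentiable (at w)" using u[THEN conjunct2, THEN conjunct1] by blast
  show "D \<in> {Dx, Dy} \<Longrightarrow> ((\<lambda>t. D (\<lambda>q. P (q, w + t *\<^sub>R axis a 1)) p) has_real_derivative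
           D (\<lambda>q. dw a P (q, w)) p) (at 0)"
    using u[THEN conjunct2, THEN conjunct2, THEN conjunct1] by blast
  show "cov_smooth F Dx Dy (dw a P)" using u[THEN conjunct2, THEN conjunct2, THEN conjunct2] by blast
qed

lemma cs_deriv:
  assumes "cov_smooth F Dx Dy P"
  shows "((\<lambda>t. P (p, w + t *\<^sub>R axis a 1)) has_real_derivative dw a P (p, w)) (at 0)"
proof -
  have d: "(\<lambda>v. P (p, v)) differentiable (at (w + 0 *\<^sub>R axis a 1))" using cs_parts(2)[OF assms] by simp
  have l: "(\<lambda>t. w + t *\<^sub>R axis a 1) differentiable (at 0)"
  proof (rule differentiableI)
    show "((\<lambda>t. w + t *\<^sub>R axis a 1) has_derivative (\<lambda>t. t *\<^sub>R axis a 1)) (at 0)"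
      by (auto intro!: derivative_eq_intros)
  qed
  have "(\<lambda>t. P (p, w + t *\<^sub>R axis a 1)) differentiable (at 0)"
    using differentiable_chain_at[OF l d] by (simp add: o_def)
  then have "DERIV (\<lambda>t. P (p, w + t *\<^sub>R axis a 1)) 0 :> deriv (\<lambda>t. P (p, w + t *\<^sub>R axis a 1)) 0"
    by (simp only: DERIV_deriv_iff_real_differentiable)
  then show ?thesis by (simp add: dw_def)
qed

lemma cs_cont:
  assumes "cov_smooth F Dx Dy P"
  shows "isCont (\<lambda>v. P (p, v)) w"
  using cs_parts(2)[OF assms] by (rule differentiable_imp_continuous_within)

lemma cs_sym:
  assumes "cov_smooth F Dx Dy P"
  shows "dw b (dw a P) (p, v) = dw a (dw b P) (p, v)"
proof -
  have Pa: "cov_smooth F Dx Dy (dw a P)" and Pb: "cov_smooth F Dx Dy (dw b P)"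
    using cs_parts(4)[OF assms] by blast+
  show ?thesis
    apply (rule clairaut[where f="\<lambda>v. P (p, v)" and A="axis a 1" and B="axis b 1"
          and fa="\<lambda>v. dw a P (p, v)" and fb="\<lambda>v. dw b P (p, v)"
          and fab="\<lambda>v. dw b (dw a P) (p, v)" and fba="\<lambda>v. dw a (dw b P) (p, v)"])
    apply (rule cs_deriv[OF assms])
    apply (rule cs_deriv[OF assms])
    apply (rule cs_deriv[OF Pa])
    apply (rule cs_deriv[OF Pb])
    apply (rule cs_cont[OF cs_parts(4)[OF Pa]])
    apply (rule cs_cont[OF cs_parts(4)[OF Pb]])
    done
qed

lemma commute_key:
  fixes Xs :: "'r::finite \<Rightarrow> 'p \<Rightarrow> real"
  assumes G: "cov_smooth F Dx Dy G" and D: "D \<in> {Dx, Dy}"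
    and eq: "\<And>p w. tD D Xs G (p, w) = X p"
  shows "tD D Xs (dw a G) = (\<lambda>_. 0)"
proof
  fix z :: "'p \<times> (real^'r)"
  obtain p w where z: "z = (p, w)" by (cases z)
  have Gb: "\<And>b. cov_smooth F Dx Dy (dw b G)" using cs_parts(4)[OF G] by blast
  have "((\<lambda>t. D (\<lambda>q. G (q, w + t *\<^sub>R axis a 1)) p + (\<Sum>b\<in>UNIV. Xs b p * dw b G (p, w + t *\<^sub>R axis a 1)))
        has_real_derivative D (\<lambda>q. dw a G (q, w)) p + (\<Sum>b\<in>UNIV. Xs b p * dw a (dw b G) (p, w))) (at 0)"
    by (intro DERIV_add DERIV_sum DERIV_cmult cs_parts(3)[OF G D] cs_deriv[OF Gb])
  moreover have "(\<lambda>t. D (\<lambda>q. G (q, w + t *\<^sub>R axis a 1)) p + (\<Sum>b\<in>UNIV. Xs b p * dw b G (p, w + t *\<^sub>R axis a 1)))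
      = (\<lambda>t. X p)"
  proof
    fix t show "D (\<lambda>q. G (q, w + t *\<^sub>R axis a 1)) p + (\<Sum>b\<in>UNIV. Xs b p * dw b G (p, w + t *\<^sub>R axis a 1)) = X p"
      using eq[of p "w + t *\<^sub>R axis a 1"] by (simp add: tD_def)
  qed
  ultimately have "DERIV (\<lambda>t. X p) 0 :> D (\<lambda>q. dw a G (q, w)) p + (\<Sum>b\<in>UNIV. Xs b p * dw a (dw b G) (p, w))"
    by simp
  then have "D (\<lambda>q. dw a G (q, w)) p + (\<Sum>b\<in>UNIV. Xs b p * dw a (dw b G) (p, w)) = 0"
    using DERIV_const by (rule DERIV_unique)
  then show "tD D Xs (dw a G) z = 0"
    using cs_sym[OF G] by (simp add: tD_def z)
qed

lemma affine_cs:
  fixes f :: "'p \<Rightarrow> real" and F :: "('p \<Rightarrow> real) set"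
  assumes dc: "diff_conn_eq F Dx Dy" and f: "f \<in> F"
  shows "cov_smooth F Dx Dy (\<lambda>(p, w::real^'r::finite). f p + (\<Sum>a\<in>UNIV. c a * w $ a))"
proof -
  have kF: "\<And>k. (\<lambda>_. k) \<in> F" using dc[unfolded diff_conn_eq_def, THEN conjunct1] by blast
  have addF: "(\<lambda>p. g p + k) \<in> F" if g: "g \<in> F" for g :: "'p \<Rightarrow> real" and k
  proof -
    have "\<forall>f\<in>F. \<forall>h\<in>F. (\<lambda>p. f p + h p) \<in> F \<and> (\<lambda>p. f p * h p) \<in> F"
      using dc[unfolded diff_conn_eq_def, THEN conjunct2, THEN conjunct1] .
    then have h: "\<forall>h\<in>F. (\<lambda>p. g p + h p) \<in> F" using g by blast
    show ?thesis by (rule h[rule_format, OF kF[of k]])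
  qed
  have dwP: "dw a (\<lambda>(p, w::real^'r). g p + (\<Sum>a\<in>UNIV. e a * w $ a)) = (\<lambda>_. e a)" for a and g :: "'p \<Rightarrow> real" and e
  proof
    fix z :: "'p \<times> (real^'r)" obtain p w where z: "z = (p, w)" by (cases z)
    have "((\<lambda>t. g p + ((\<Sum>b\<in>UNIV. e b * w $ b) + t * e a)) has_real_derivative e a) (at 0)"
      by (auto intro!: derivative_eq_intros)
    then show "dw a (\<lambda>(p, w::real^'r). g p + (\<Sum>a\<in>UNIV. e a * w $ a)) z = e a"
      unfolding dw_def z case_prod_conv sum_axis_lin by (rule DERIV_imp_deriv)
  qed
  show ?thesis
  proof (rule cov_smooth.coinduct[where X="\<lambda>P. \<exists>g\<in>F. \<exists>e. P = (\<lambda>(p, w::real^'r). g p + (\<Sum>a\<in>UNIV. e a * w $ a))"])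
    show "\<exists>g\<in>F. \<exists>e. (\<lambda>(p, w::real^'r). f p + (\<Sum>a\<in>UNIV. c a * w $ a)) = (\<lambda>(p, w). g p + (\<Sum>a\<in>UNIV. e a * w $ a))"
      using f by blast
  next
    fix P :: "'p \<times> (real^'r) \<Rightarrow> real"
    assume "\<exists>g\<in>F. \<exists>e. P = (\<lambda>(p, w::real^'r). g p + (\<Sum>a\<in>UNIV. e a * w $ a))"
    then obtain g e where g: "g \<in> F" and P: "P = (\<lambda>(p, w::real^'r). g p + (\<Sum>a\<in>UNIV. e a * w $ a))" by blast
    have 1: "\<forall>w. (\<lambda>p. P (p, w)) \<in> F" using addF[OF g] by (simp add: P)
    have 2: "\<forall>p w. (\<lambda>v. P (p, v)) differentiable (at w)"
    proof (intro allI)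
      fix p and w :: "real^'r"
      have "((\<lambda>v::real^'r. g p + (\<Sum>a\<in>UNIV. e a * v $ a)) has_derivative (\<lambda>h. (\<Sum>a\<in>UNIV. e a * h $ a))) (at w)"
      proof -
        have "linear (\<lambda>h::real^'r. \<Sum>a\<in>UNIV. e a * h $ a)"
          by (auto simp: linear_iff sum.distrib algebra_simps sum_distrib_left)
        then have "((\<lambda>h::real^'r. \<Sum>a\<in>UNIV. e a * h $ a) has_derivative (\<lambda>h. \<Sum>a\<in>UNIV. e a * h $ a)) (at w)"
          by (intro bounded_linear_imp_has_derivative) (simp add: linear_conv_bounded_linear)
        from has_derivative_add_const[OF this, of "g p"] show ?thesis by (simp add: add.commute)
      qed
      then show "(\<lambda>v. P (p, v)) differentiable (at w)" by (auto simp: P differentiable_def)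
    qed
    have 3: "\<forall>a p w. \<forall>D\<in>{Dx, Dy}.
        ((\<lambda>t. D (\<lambda>q. P (q, w + t *\<^sub>R axis a 1)) p) has_real_derivative
           D (\<lambda>q. dw a P (q, w)) p) (at 0)"
    proof (intro allI ballI)
      fix a p w D assume D: "D \<in> {Dx, Dy}"
      have "(\<lambda>t. D (\<lambda>q. P (q, w + t *\<^sub>R axis a 1)) p) = (\<lambda>t. D g p)"
        using D_props(2)[OF dc D g] by (simp add: P)
      moreover have "D (\<lambda>q. dw a P (q, w)) p = 0"
        using D_props(1)[OF dc D] by (simp add: P dwP)
      ultimately show "((\<lambda>t. D (\<lambda>q. P (q, w + t *\<^sub>R axis a 1)) p) has_real_derivative
           D (\<lambda>q. dw a P (q, w)) p) (at 0)" by simp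
    qed
    have 4: "\<forall>a. (\<exists>g\<in>F. \<exists>e. dw a P = (\<lambda>(p, w::real^'r). g p + (\<Sum>a\<in>UNIV. e a * w $ a)))
               \<or> cov_smooth F Dx Dy (dw a P)"
    proof
      fix a
      show "(\<exists>g\<in>F. \<exists>e. dw a P = (\<lambda>(p, w::real^'r). g p + (\<Sum>a\<in>UNIV. e a * w $ a)))
               \<or> cov_smooth F Dx Dy (dw a P)"
      proof (rule disjI1, rule bexI[of _ "\<lambda>_. e a"], rule exI[of _ "\<lambda>_. 0"])
        show "dw a P = (\<lambda>(p, w::real^'r). (\<lambda>_. e a) p + (\<Sum>b\<in>UNIV. (\<lambda>_. 0) b * w $ b))"
          by (auto simp: P dwP)
        show "(\<lambda>_. e a) \<in> F" by (rule kF)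
      qed
    qed
    show "\<exists>Q. P = Q \<and> (\<forall>w. (\<lambda>p. Q (p, w)) \<in> F) \<and>
         (\<forall>p w. (\<lambda>v. Q (p, v)) differentiable (at w)) \<and>
         (\<forall>a p w. \<forall>D\<in>{Dx, Dy}.
            ((\<lambda>t. D (\<lambda>q. Q (q, w + t *\<^sub>R axis a 1)) p) has_real_derivative
             D (\<lambda>q. dw a Q (q, w)) p) (at 0)) \<and>
         (\<forall>a. (\<exists>g\<in>F. \<exists>e. dw a Q = (\<lambda>(p, w::real^'r). g p + (\<Sum>a\<in>UNIV. e a * w $ a)))
               \<or> cov_smooth F Dx Dy (dw a Q))"
      by (intro exI[of _ P] conjI refl 1 2 3 4)
  qed
qed

theorem mainTheorem3:
  fixes F :: "('p \<Rightarrow> real) set"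
    and Dx Dy :: "('p \<Rightarrow> real) \<Rightarrow> ('p \<Rightarrow> real)"
    and Xs Ys :: "'r::finite \<Rightarrow> 'p \<Rightarrow> real"
    and X Y :: "'p \<Rightarrow> real"
  assumes "diff_conn_eq F Dx Dy"
    and "abelian_covering F Dx Dy Xs Ys"
    and "irreducible_cov F Dx Dy Xs Ys"
    and "conservation_law F Dx Dy X Y"
    and "\<not> trivial_cl F Dx Dy X Y"
  shows "trivial_cl (cov_funs F Dx Dy) (tD Dx Xs) (tD Dy Ys)
            (pullback X :: 'p \<times> (real^'r) \<Rightarrow> real) (pullback Y)
         \<longleftrightarrow> in_L_tau F Dx Dy Xs Ys X Y"
proof
  assume "trivial_cl (cov_funs F Dx Dy) (tD Dx Xs) (tD Dy Ys)
            (pullback X :: 'p \<times> (real^'r) \<Rightarrow> real) (pullback Y)"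
  then obtain G :: "'p \<times> (real^'r) \<Rightarrow> real" where G: "cov_smooth F Dx Dy G"
    and eX: "pullback X = tD Dx Xs G" and eY: "pullback Y = tD Dy Ys G"
    unfolding trivial_cl_def cov_funs_def by blast
  have eX': "tD Dx Xs G (p, w) = X p" for p w using fun_cong[OF eX, of "(p, w)"] by (simp add: pullback_def)
  have eY': "tD Dy Ys G (p, w) = Y p" for p w using fun_cong[OF eY, of "(p, w)"] by (simp add: pullback_def)
  have "\<forall>a. \<exists>k. dw a G = (\<lambda>_. k)"
  proof
    fix a
    have "dw a G \<in> cov_funs F Dx Dy" using cs_parts(4)[OF G] by (simp add: cov_funs_def)
    moreover have "tD Dx Xs (dw a G) = (\<lambda>_. 0)" by (rule commute_key[OF G _ eX']) simp
    moreover have "tD Dy Ys (dw a G) = (\<lambda>_. 0)" by (rule commute_key[OF G _ eY']) simp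
    ultimately show "\<exists>k. dw a G = (\<lambda>_. k)" using assms(3)[unfolded irreducible_cov_def, rule_format, of "dw a G"] by blast
  qed
  then obtain c where c: "\<And>a. dw a G = (\<lambda>_. c a)" by metis
  define P where "P = (\<lambda>q. G (q, 0))"
  have PF: "P \<in> F" unfolding P_def by (rule cs_parts(1)[OF G])
  have "(\<lambda>p. X p - (\<Sum>a\<in>UNIV. c a * Xs a p)) = Dx P"
  proof
    fix p show "X p - (\<Sum>a\<in>UNIV. c a * Xs a p) = Dx P p"
      using eX'[of p 0] by (simp add: tD_def c P_def mult.commute)
  qed
  moreover have "(\<lambda>p. Y p - (\<Sum>a\<in>UNIV. c a * Ys a p)) = Dy P"
  proof
    fix p show "Y p - (\<Sum>a\<in>UNIV. c a * Ys a p) = Dy P p"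
      using eY'[of p 0] by (simp add: tD_def c P_def mult.commute)
  qed
  ultimately show "in_L_tau F Dx Dy Xs Ys X Y"
    unfolding in_L_tau_def trivial_cl_def using PF by (intro exI[of _ c] bexI[of _ P] conjI)
next
  assume "in_L_tau F Dx Dy Xs Ys X Y"
  then obtain c P where PF: "P \<in> F"
    and eX: "(\<lambda>p. X p - (\<Sum>a\<in>UNIV. c a * Xs a p)) = Dx P"
    and eY: "(\<lambda>p. Y p - (\<Sum>a\<in>UNIV. c a * Ys a p)) = Dy P"
    unfolding in_L_tau_def trivial_cl_def by blast
  define G where "G = (\<lambda>(p, w::real^'r). P p + (\<Sum>a\<in>UNIV. c a * w $ a))"
  have G: "cov_smooth F Dx Dy G" unfolding G_def by (rule affine_cs[OF assms(1) PF])
  have dwG: "dw a G = (\<lambda>_. c a)" for a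
  proof
    fix z :: "'p \<times> (real^'r)" obtain p w where z: "z = (p, w)" by (cases z)
    have "((\<lambda>t. P p + ((\<Sum>b\<in>UNIV. c b * w $ b) + t * c a)) has_real_derivative c a) (at 0)"
      by (auto intro!: derivative_eq_intros)
    then show "dw a G z = c a"
      unfolding dw_def z G_def case_prod_conv sum_axis_lin by (rule DERIV_imp_deriv)
  qed
  have tx: "tD D Zs G = pullback Z" if D: "D \<in> {Dx, Dy}"
    and e: "(\<lambda>p. Z p - (\<Sum>a\<in>UNIV. c a * Zs a p)) = D P" for D Zs Z
  proof
    fix z :: "'p \<times> (real^'r)" obtain p w where z: "z = (p, w)" by (cases z)
    have "D (\<lambda>q. G (q, w)) = D P" unfolding G_def using D_props(2)[OF assms(1) D PF] by simp
    moreover have "Z p = D P p + (\<Sum>a\<in>UNIV. c a * Zs a p)" using fun_cong[OF e, of p] by simp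
    ultimately show "tD D Zs G z = pullback Z z"
      by (simp add: tD_def z dwG pullback_def mult.commute)
  qed
  show "trivial_cl (cov_funs F Dx Dy) (tD Dx Xs) (tD Dy Ys)
            (pullback X :: 'p \<times> (real^'r) \<Rightarrow> real) (pullback Y)"
    unfolding trivial_cl_def
  proof (rule bexI[of _ G])
    show "G \<in> cov_funs F Dx Dy" using G by (simp add: cov_funs_def)
    show "pullback X = tD Dx Xs G \<and> pullback Y = tD Dy Ys G"
      using tx[where D=Dx and Zs=Xs and Z=X, OF _ eX] tx[where D=Dy and Zs=Ys and Z=Y, OF _ eY] by simp
  qed
qed

end
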